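(* Let $M=2^\lambda$, let $\mathcal{S}$ be the $M$-PSK signal set with labelling $\mu(m)=e^{j(2m+1)\pi/M}$, and let $n\ge1$. Let $X$ be the bit-wise XOR map on $\mathbb{Z}_M^n\times\mathbb{Z}_M^n$, $X(u,v)=(u_1\oplus v_1,\dots,u_n\oplus v_n)$, where $\oplus$ is the bitwise XOR of the $\lambda$-bit binary representations. Then $X$ is a Latin square for the $n\times n$ system, and for every nonzero $\Delta x=[\Delta x_A^T\;\Delta x_B^T]^T\in\Delta\mathcal{S}^{2n}$ such that for each $1\le i\le n$ either $\Delta x_{A,i}=\Delta x_{B,i}$ or $\Delta x_{A,i}=-\Delta x_{B,i}$, the map $X$ removes $[\mathrm{span}(\Delta x)]^{\perp}$.
   Context: $M$-PSK signal set: $\mathcal{S}=\{e^{j(2m+1)\pi/M}: m\in\mathbb{Z}_M\}$, labelled by $\mu(m)=e^{j(2m+1)\pi/M}$; for $u\in\mathbb{Z}_M^n$, $\mu(u)=(\mu(u_1),\dots,\mu(u_n))^T$. $\Delta\mathcal{S}=\{s-s':s,s'\in\mathcal{S}\}$. For $V\subseteq\mathbb{C}^N$, $V^\perp=\{y:y^Tv=0\ \forall v\in V\}$. A Latin square for the $n\times n$ system is a map $L:\mathbb{Z}_M^{n}\times\mathbb{Z}_M^{n}\to\Sigma$ with no symbol repeated in any row or column. For nonzero $w\in\mathbb{C}^{2n}$, $L$ removes $[\mathrm{span}(w)]^\perp$ if $L(u,v)=L(u',v')$ whenever $[\mu(u)^T-\mu(u')^T\;\;\mu(v)^T-\mu(v')^T]^T\in\mathrm{span}(w)\setminus\{0\}$.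 *)

theory Defs
  imports Complex_Main
begin

text \<open>Vectors in Z_M^n are functions from a finite index type 'n (with CARD('n) = n)
  to nat, with all entries below M.\<close>

definition ZMn :: "nat \<Rightarrow> ('n::finite \<Rightarrow> nat) set" where
  "ZMn M = {u. \<forall>i. u i < M}"

definition mu :: "nat \<Rightarrow> nat \<Rightarrow> complex" where
  "mu M m = cis ((2 * real m + 1) * pi / real M)"

definition PSK :: "nat \<Rightarrow> complex set" where
  "PSK M = {mu M m | m. m < M}"

definition DeltaS :: "nat \<Rightarrow> complex set" where
  "DeltaS M = {s - s' | s s'. s \<in> PSK M \<and> s' \<in> PSK M}"

definition latin_square :: "nat \<Rightarrow> (('n::finite \<Rightarrow> nat) \<Rightarrow> ('n \<Rightarrow> nat) \<Rightarrow> 's) \<Rightarrow> bool" where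
  "latin_square M L \<longleftrightarrow>
     (\<forall>u \<in> ZMn M. inj_on (\<lambda>v. L u v) (ZMn M)) \<and>
     (\<forall>v \<in> ZMn M. inj_on (\<lambda>u. L u v) (ZMn M))"

text \<open>L removes [span(w)]^perp, where w = [wA^T wB^T]^T: whenever the difference vector
  [mu(u)-mu(u'); mu(v)-mu(v')] lies in span(w) minus 0, L(u,v) = L(u',v').\<close>
definition removes ::
  "nat \<Rightarrow> (('n::finite \<Rightarrow> nat) \<Rightarrow> ('n \<Rightarrow> nat) \<Rightarrow> 's) \<Rightarrow> ('n \<Rightarrow> complex) \<Rightarrow> ('n \<Rightarrow> complex) \<Rightarrow> bool" where
  "removes M L wA wB \<longleftrightarrow>
     (\<forall>u \<in> ZMn M. \<forall>u' \<in> ZMn M. \<forall>v \<in> ZMn M. \<forall>v' \<in> ZMn M.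
        (\<exists>c::complex. (\<forall>i. mu M (u i) - mu M (u' i) = c * wA i) \<and>
                      (\<forall>i. mu M (v i) - mu M (v' i) = c * wB i)) \<and>
        (\<exists>i. mu M (u i) - mu M (u' i) \<noteq> 0 \<or> mu M (v i) - mu M (v' i) \<noteq> 0)
        \<longrightarrow> L u v = L u' v')"

definition xor_map :: "('n \<Rightarrow> nat) \<Rightarrow> ('n \<Rightarrow> nat) \<Rightarrow> ('n \<Rightarrow> nat)" where
  "xor_map u v = (\<lambda>i. xor (u i) (v i))"

end

theory Submission imports Defs begin
lemma xor_low: "(a::nat) < 2^k \<Longrightarrow> xor a (2^k) = a + 2^k"
proof -
  assume a: "a < 2^k"
  have "and a (2^k) = 0"
    by (metis a and_exp_eq_0_iff_not_bit bit_take_bit_iff less_irrefl take_bit_nat_eq_self)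
  thus ?thesis by (simp add: disjunctive_add_eq_xor)
qed
lemma xor_high: "(a::nat) < 2^Suc k \<Longrightarrow> 2^k \<le> a \<Longrightarrow> xor a (2^k) = a - 2^k"
proof -
  assume "a < 2^Suc k" "2^k \<le> a"
  then have b: "a - 2^k < 2^k" and e: "a = (a - 2^k) + 2^k" by auto
  have "xor a (2^k) = xor (xor (a - 2^k) (2^k)) (2^k)" using xor_low[OF b] e by simp
  also have "\<dots> = a - 2^k" by (simp add: xor.assoc)
  finally show ?thesis .
qed
lemma cis_inj:
  assumes "cis x = cis y" "0 < x" "x < 2*pi" "0 < y" "y < 2*pi"
  shows "x = y"
proof -
  have "cos x = cos y" "sin x = sin y" using assms(1)
    by (metis Re_complex_of_real cis.sel(1)) (metis assms(1) cis.sel(2))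
  then obtain n::int where n: "x = y + 2*pi*n" using sin_cos_eq_iff by metis
  have "\<bar>2*pi*n\<bar> < 2*pi" using n assms by auto
  hence "\<bar>real_of_int n\<bar> < 1" by (simp add: abs_mult)
  hence "n = 0" by linarith
  thus ?thesis using n by simp
qed

lemma mu_inj: assumes "a < M" "b < M" "mu M a = mu M b" shows "a = b"
proof -
  have M: "real M > 0" using assms by auto
  have r: "0 < (2 * real m + 1) * pi / real M \<and> (2 * real m + 1) * pi / real M < 2*pi" if "m < M" for m
  proof -
    have "2 * real m + 1 < 2 * real M" using that by linarith
    hence "(2 * real m + 1) * pi < 2 * real M * pi" by simp
    moreover have "0 < (2 * real m + 1) * pi" by (intro mult_pos_pos) auto
    ultimately show ?thesis using M by (simp add: field_simps)
  qed
  have "(2 * real a + 1) * pi / real M = (2 * real b + 1) * pi / real M"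
    using cis_inj[OF assms(3)[unfolded mu_def]] r[OF assms(1)] r[OF assms(2)] by blast
  thus ?thesis using M by (simp add: field_simps)
qed

lemma xor_lt: "(a::nat) < 2^Suc k \<Longrightarrow> xor a (2^k) < 2^Suc k"
  by (cases "a < 2^k") (auto simp: xor_low xor_high)

lemma mu_neg: assumes "a < 2^Suc k" shows "- mu (2^Suc k) a = mu (2^Suc k) (xor a (2^k))"
proof (cases "a < 2^k")
  case True
  have e: "(2 * real (a + 2^k) + 1) * pi / real (2^Suc k) = (2 * real a + 1) * pi / real (2^Suc k) + pi"
    by (simp add: field_simps)
  show ?thesis unfolding mu_def xor_low[OF True] e
    by (simp add: cis_mult[symmetric] complex_eq_iff cos_add sin_add)
next
  case False
  have e: "(2 * real (a - 2^k) + 1) * pi / real (2^Suc k) = (2 * real a + 1) * pi / real (2^Suc k) - pi"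
    using False by (simp add: field_simps of_nat_diff)
  have x: "xor a (2^k) = a - 2^k" using xor_high[OF assms] False by simp
  show ?thesis unfolding mu_def x e
    by (simp add: complex_eq_iff cos_diff sin_diff)
qed

lemma unit_pair:
  fixes x y z w :: complex
  assumes "norm x = 1" "norm y = 1" "norm z = 1" "norm w = 1" "x + y = z + w" "x + y \<noteq> 0"
  shows "(x = z \<and> y = w) \<or> (x = w \<and> y = z)"
proof -
  have inv: "cnj u = 1 / u" if "norm u = 1" for u :: complex
  proof -
    have "u * cnj u = 1" using that complex_norm_square[of u] by simp
    moreover have "u \<noteq> 0" using that by auto
    ultimately show ?thesis by (simp add: field_simps)
  qed
  have nz: "u \<noteq> 0" if "norm u = 1" for u :: complex using that by auto
  define s where "s = x + y"
  have cs: "cnj s \<noteq> 0" using assms(6) unfolding s_def complex_cnj_zero_iff .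
  have "cnj s = cnj x + cnj y" using s_def by simp
  also have "\<dots> = (x + y) / (x * y)" using inv[OF assms(1)] inv[OF assms(2)] nz[OF assms(1)] nz[OF assms(2)]
    by (simp add: field_simps)
  finally have "cnj s = s / (x * y)" using s_def by simp
  hence p1: "x * y = s / cnj s" using cs nz[OF assms(1)] nz[OF assms(2)] by (auto simp add: field_simps)
  have sw: "s = z + w" using assms(5) s_def by simp
  have "cnj s = cnj z + cnj w" using sw by simp
  also have "\<dots> = (z + w) / (z * w)" using inv[OF assms(3)] inv[OF assms(4)] nz[OF assms(3)] nz[OF assms(4)]
    by (simp add: field_simps)
  finally have "cnj s = s / (z * w)" using sw by simp
  hence p2: "z * w = s / cnj s" using cs nz[OF assms(3)] nz[OF assms(4)] by (auto simp add: field_simps)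
  have "(z - x) * (z - y) = 0"
  proof -
    have "(z - x) * (z - y) = z*z - (x+y)*z + x*y" by (simp add: algebra_simps)
    also have "\<dots> = z*z - (z+w)*z + z*w" using p1 p2 assms(5) by simp
    finally show ?thesis by (simp add: algebra_simps)
  qed
  thus ?thesis using assms(5) by auto
qed
lemma xor_cancel: "xor (u::nat) v = xor u v' \<Longrightarrow> v = v'"
  by (metis xor.assoc xor_self_eq xor.left_neutral)

lemma xor_aa [simp]: "xor (a::nat) (xor a x) = x"
  by (simp add: xor.assoc[symmetric])

lemma sum_case:
  assumes M: "M = 2^lam" and ab: "a < M" "b < M" "c < M" "d < M"
    and e: "mu M a + mu M c = mu M b + mu M d"
  shows "(a = b \<and> c = d) \<or> (a = d \<and> c = b) \<or> (lam > 0 \<and> c = xor a (2^(lam-1)) \<and> d = xor b (2^(lam-1)))"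
proof (cases "mu M a + mu M c = 0")
  case False
  from unit_pair[OF _ _ _ _ e False] have "(mu M a = mu M b \<and> mu M c = mu M d) \<or> (mu M a = mu M d \<and> mu M c = mu M b)"
    by (simp add: mu_def)
  thus ?thesis using mu_inj ab by blast
next
  case True
  show ?thesis
  proof (cases lam)
    case 0 thus ?thesis using ab M by simp
  next
    case (Suc k)
    have c: "mu M c = mu M (xor a (2^k))" using True mu_neg[of a k] ab M Suc
      by (simp add: add_eq_0_iff)
    have d: "mu M d = mu M (xor b (2^k))" using True e mu_neg[of b k] ab M Suc
      by (simp add: add_eq_0_iff)
    have "c = xor a (2^k)" using mu_inj[OF _ _ c] ab xor_lt[of a k] M Suc by simp
    moreover have "d = xor b (2^k)" using mu_inj[OF _ _ d] ab xor_lt[of b k] M Suc by simp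
    ultimately show ?thesis using Suc by simp
  qed
qed

lemma coord:
  assumes M: "M = 2^lam" and ab: "a < M" "b < M" "c < M" "d < M"
    and e: "mu M a - mu M b = mu M c - mu M d \<or> mu M a - mu M b = - (mu M c - mu M d)"
  shows "xor a c = xor b d"
  using e
proof
  assume "mu M a - mu M b = mu M c - mu M d"
  hence "mu M a + mu M d = mu M b + mu M c" by (simp add: algebra_simps)
  from sum_case[OF M ab(1,2,4,3) this] show ?thesis
    by (auto simp: xor.assoc xor.left_commute xor.commute)
next
  assume "mu M a - mu M b = - (mu M c - mu M d)"
  hence "mu M a + mu M c = mu M b + mu M d" by (simp add: algebra_simps)
  from sum_case[OF M ab this] show ?thesis
    by (auto simp: xor.assoc xor.left_commute xor.commute)
qed

theorem lemma5:
  fixes lam :: nat and dA dB :: "'n::finite \<Rightarrow> complex"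
  assumes "\<forall>i. dA i \<in> DeltaS (2 ^ lam) \<and> dB i \<in> DeltaS (2 ^ lam)"
    and "\<exists>i. dA i \<noteq> 0 \<or> dB i \<noteq> 0"
    and "\<forall>i. dA i = dB i \<or> dA i = - dB i"
  shows "latin_square (2 ^ lam) (xor_map :: ('n \<Rightarrow> nat) \<Rightarrow> _ \<Rightarrow> _)
         \<and> removes (2 ^ lam) (xor_map :: ('n \<Rightarrow> nat) \<Rightarrow> _ \<Rightarrow> _) dA dB"
proof
  show "latin_square (2 ^ lam) (xor_map :: ('n \<Rightarrow> nat) \<Rightarrow> _ \<Rightarrow> _)"
    unfolding latin_square_def inj_on_def xor_map_def
    by (auto intro!: ext dest: fun_cong intro: xor_cancel simp: xor.commute)
next
  show "removes (2 ^ lam) (xor_map :: ('n \<Rightarrow> nat) \<Rightarrow> _ \<Rightarrow> _) dA dB"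
    unfolding removes_def
  proof (intro ballI impI)
    fix u u' v v' :: "'n \<Rightarrow> nat"
    assume h: "u \<in> ZMn (2^lam)" "u' \<in> ZMn (2^lam)" "v \<in> ZMn (2^lam)" "v' \<in> ZMn (2^lam)"
      and H: "(\<exists>c. (\<forall>i. mu (2 ^ lam) (u i) - mu (2 ^ lam) (u' i) = c * dA i) \<and>
           (\<forall>i. mu (2 ^ lam) (v i) - mu (2 ^ lam) (v' i) = c * dB i)) \<and>
       (\<exists>i. mu (2 ^ lam) (u i) - mu (2 ^ lam) (u' i) \<noteq> 0 \<or> mu (2 ^ lam) (v i) - mu (2 ^ lam) (v' i) \<noteq> 0)"
    then obtain c where c: "\<forall>i. mu (2 ^ lam) (u i) - mu (2 ^ lam) (u' i) = c * dA i"
       "\<forall>i. mu (2 ^ lam) (v i) - mu (2 ^ lam) (v' i) = c * dB i" by blast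
    show "xor_map u v = xor_map u' v'"
      unfolding xor_map_def
    proof
      fix i
      have "mu (2 ^ lam) (u i) - mu (2 ^ lam) (u' i) = mu (2 ^ lam) (v i) - mu (2 ^ lam) (v' i) \<or>
            mu (2 ^ lam) (u i) - mu (2 ^ lam) (u' i) = - (mu (2 ^ lam) (v i) - mu (2 ^ lam) (v' i))"
        using c assms(3) by (metis mult_minus_right)
      thus "xor (u i) (v i) = xor (u' i) (v' i)"
        using coord[OF refl] h unfolding ZMn_def by blast
    qed
  qed
qed
end
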